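(* Under the Standing Setup and Assumption (G) described in the context, $$\mathcal{E}(PC_{f,\mathcal{T}})=\sum_{\alpha\in\mathbf{F}_2^{k2^{s-1}}}\ \prod_{c=0}^{2^s-1}\mathcal{E}\big(f\oplus\varphi_{\chi(c,\alpha)}\big).$$
   Context: Standing Setup. $f:\mathbf{F}_2^n\to\mathbf{F}_2$ is a Boolean function. $\mathbf{x}_1,\ldots,\mathbf{x}_n$ are binary sequences, $\mathbf{x}_j=(x_j(t))_{t\ge0}$, with $\mathbf{x}_j$ periodic of period $T_j$, i.e. $x_j(t)=x_j(t \bmod T_j)$. Let $s\ge1$ and integers $0=\ell_1<\ell_2<\cdots<\ell_{s+1}=k\le n$; variable $j$ belongs to block $i$ if $\ell_i<j\le\ell_{i+1}$. For $1\le i\le s$, $M_i=q_i\,\mathrm{lcm}(T_{\ell_i+1},\ldots,T_{\ell_{i+1}})$ with $q_i$ a positive integer. For $c=\sum_{i=1}^s c_i2^{i-1}\in\{0,\ldots,2^s-1\}$ with $c_i\in\{0,1\}$, put $\tau_c=\sum_{i=1}^s c_iM_i$, and $\mathcal{T}=\{\tau_c\}$. The parity-check sequence is $PC_{f,\mathcal{T}}(t)=\bigoplus_{c=0}^{2^s-1} f\big(x_1(t+\tau_c),\ldots,x_n(t+\tau_c)\big)$. The bias of a Boolean function $h$ of $m$ variables is $\mathcal{E}(h)=2^{-m}\sum_{x\in\mathbf{F}_2^m}(-1)^{h(x)}$. The bias $\mathcal{E}(PC_{f,\mathcal{T}})$ is the bias of $PC_{f,\mathcal{T}}(t)$ (for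 a fixed $t\ge0$) viewed as a Boolean function of the $T_1+\cdots+T_n$ bits $x_j(0),\ldots,x_j(T_j-1)$, $1\le j\le n$; equivalently $\mathbb{E}[(-1)^{PC_{f,\mathcal{T}}(t)}]$ when these bits are independent and uniform. Assumption (G): (i) for every $j$ with $k<j\le n$, the $2^s$ integers $\tau_c$ are pairwise incongruent modulo $T_j$; (ii) for every $i\in\{1,\ldots,s\}$ and every $j$ in block $i$, the $2^{s-1}$ integers $\sum_{l\ne i}c_lM_l$ ($c_l\in\{0,1\}$) are pairwise incongruent modulo $T_j$. For $\beta\in\mathbf{F}_2^n$, $\varphi_\beta$ is the linear function $x\mapsto\beta\cdot x$. The map $\chi$: write $\alpha\in\mathbf{F}_2^{k2^{s-1}}$ as $\alpha=(\alpha_1,\ldots,\alpha_k)$ with $\alpha_j=(\alpha_{j,0},\ldots,\alpha_{j,2^{s-1}-1})\in\mathbf{F}_2^{2^{s-1}}$. For $0\le c<2^s$ define $\chi(c,\alpha)=(\chi_1(c,\alpha),\ldots,\chi_k(c,\alpha),0,\ldots,0)\in\mathbf{F}_2^n$ (last $n-k$ coordinates zero), where for $j$ in block $i$, $\chi_j(c,\alpha)=\alpha_{j,m}$ with $m$ the integer obtained from the binary expansion of $c$ by deleting the bit $c_i$ (the bit of weight $2^{i-1}$); explicitly, if $c=2^iq+c_i2^{i-1}+r$ with $0\le r<2^{i-1}$, then $m=2^{i-1}q+r$. *)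

theory Defs
  imports Complex_Main "HOL-Library.FuncSet"
begin

text \<open>Vectors of F_2^m are functions nat => bool restricted to the index set {1..m}
  (elements of PiE {1..m} (\<lambda>_. UNIV)); xor is (\<noteq>) on bool.\<close>

definition F2vecs :: "nat \<Rightarrow> (nat \<Rightarrow> bool) set" where
  "F2vecs m = PiE {1..m} (\<lambda>_. UNIV)"

definition bias :: "nat \<Rightarrow> ((nat \<Rightarrow> bool) \<Rightarrow> bool) \<Rightarrow> real" where
  "bias m h = (\<Sum>x\<in>F2vecs m. if h x then -1 else 1) / 2 ^ m"

definition lin :: "nat \<Rightarrow> (nat \<Rightarrow> bool) \<Rightarrow> (nat \<Rightarrow> bool) \<Rightarrow> bool" where
  "lin m \<beta> x = odd (card {j\<in>{1..m}. \<beta> j \<and> x j})"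

definition blockM :: "(nat \<Rightarrow> nat) \<Rightarrow> (nat \<Rightarrow> nat) \<Rightarrow> (nat \<Rightarrow> nat) \<Rightarrow> nat \<Rightarrow> nat" where
  "blockM T l q i = q i * Lcm (T ` {l i + 1 .. l (Suc i)})"

text \<open>tau_c = sum_i c_i M_i, with c_i the bit of weight 2^(i-1).\<close>
definition tau :: "(nat \<Rightarrow> nat) \<Rightarrow> (nat \<Rightarrow> nat) \<Rightarrow> (nat \<Rightarrow> nat) \<Rightarrow> nat \<Rightarrow> nat \<Rightarrow> nat" where
  "tau T l q s c = (\<Sum>i=1..s. if bit c (i - 1) then blockM T l q i else 0)"

text \<open>Parity-check sequence at time t; X j r = x_j(r) for r < T_j, x_j(t) = X j (t mod T_j).\<close>
definition PC :: "((nat \<Rightarrow> bool) \<Rightarrow> bool) \<Rightarrow> nat \<Rightarrow> (nat \<Rightarrow> nat) \<Rightarrow> (nat \<Rightarrow> nat)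
    \<Rightarrow> (nat \<Rightarrow> nat) \<Rightarrow> nat \<Rightarrow> (nat \<Rightarrow> nat \<Rightarrow> bool) \<Rightarrow> nat \<Rightarrow> bool" where
  "PC f n T l q s X t =
     odd (card {c\<in>{..<2^s}. f (\<lambda>j\<in>{1..n}. X j ((t + tau T l q s c) mod T j))})"

text \<open>Bias of PC(t) as a Boolean function of the T_1+...+T_n bits x_j(r), 0 <= r < T_j.\<close>
definition bias_PC :: "((nat \<Rightarrow> bool) \<Rightarrow> bool) \<Rightarrow> nat \<Rightarrow> (nat \<Rightarrow> nat) \<Rightarrow> (nat \<Rightarrow> nat)
    \<Rightarrow> (nat \<Rightarrow> nat) \<Rightarrow> nat \<Rightarrow> nat \<Rightarrow> real" where
  "bias_PC f n T l q s t =
     (\<Sum>X\<in>PiE {1..n} (\<lambda>j. PiE {..<T j} (\<lambda>_. UNIV)). if PC f n T l q s X t then -1 else 1)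
       / 2 ^ (\<Sum>j=1..n. T j)"

definition blk :: "(nat \<Rightarrow> nat) \<Rightarrow> nat \<Rightarrow> nat \<Rightarrow> nat" where
  "blk l s j = (THE i. i \<in> {1..s} \<and> l i < j \<and> j \<le> l (Suc i))"

text \<open>Delete bit of weight 2^(i-1) from c: c = 2^i q + c_i 2^(i-1) + r gives 2^(i-1) q + r.\<close>
definition delbit :: "nat \<Rightarrow> nat \<Rightarrow> nat" where
  "delbit c i = 2 ^ (i - 1) * (c div 2 ^ i) + c mod 2 ^ (i - 1)"

text \<open>chi(c, alpha) in F_2^n; alpha j m = alpha_{j,m} for 1 <= j <= k, m < 2^(s-1).\<close>
definition chi :: "(nat \<Rightarrow> nat) \<Rightarrow> nat \<Rightarrow> nat \<Rightarrow> nat \<Rightarrow> nat \<Rightarrow> (nat \<Rightarrow> nat \<Rightarrow> bool) \<Rightarrow> nat \<Rightarrow> bool" where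
  "chi l s k n c \<alpha> = (\<lambda>j\<in>{1..n}. if j \<le> k then \<alpha> j (delbit c (blk l s j)) else False)"

end

theory Submission
  imports Defs "HOL-Number_Theory.Cong"
begin

unbundle bit_operations_syntax



lemma delbit_eq: "delbit c (Suc p) = push_bit p (drop_bit (Suc p) c) + take_bit p c"
  by (simp add: delbit_def push_bit_eq_mult drop_bit_eq_div take_bit_eq_mod mult.commute)

lemma bit_delbit: "bit (delbit c (Suc p)) n \<longleftrightarrow> (if n < p then bit c n else bit c (Suc n))"
proof -
  have "delbit c (Suc p) = push_bit p (drop_bit (Suc p) c) OR take_bit p c"
    unfolding delbit_eq by (rule disjunctive_add) (auto simp: bit_simps)
  then show ?thesis by (auto simp: bit_simps)
qed

definition ins :: "nat \<Rightarrow> nat \<Rightarrow> nat" where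
  "ins m p = push_bit (Suc p) (drop_bit p m) + take_bit p m"

lemma bit_ins: "bit (ins m p) n \<longleftrightarrow> (if n < p then bit m n else if n = p then False else bit m (n - 1))"
proof -
  have "ins m p = push_bit (Suc p) (drop_bit p m) OR take_bit p m"
    unfolding ins_def by (rule disjunctive_add) (auto simp: bit_simps)
  then have e: "bit (ins m p) n \<longleftrightarrow> (Suc p \<le> n \<and> bit m (p + (n - Suc p))) \<or> (n < p \<and> bit m n)"
    by (simp only: bit_or_iff bit_push_bit_iff bit_drop_bit_eq bit_take_bit_iff comp_def possible_bit_def) auto
  show ?thesis unfolding e by (cases "n < p"; cases "n = p") (auto simp: Suc_diff_Suc)
qed

lemma less_pow_bits: "(c::nat) < 2^s \<longleftrightarrow> (\<forall>n. bit c n \<longrightarrow> n < s)"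
  by (auto simp: take_bit_nat_eq_self_iff[symmetric] bit_eq_iff bit_take_bit_iff)

lemma delbit_ins: "delbit (ins m p) (Suc p) = m"
  by (rule bit_eqI) (auto simp: bit_delbit bit_ins)

lemma ins_delbit: "\<not> bit c p \<Longrightarrow> ins (delbit c (Suc p)) p = c"
  apply (rule bit_eqI) apply (auto simp: bit_delbit bit_ins)
  done

lemma delbit_flip: "delbit (flip_bit p c) (Suc p) = delbit c (Suc p)"
  by (rule bit_eqI) (auto simp: bit_delbit bit_simps)

lemma delbit_unset: "delbit (unset_bit p c) (Suc p) = delbit c (Suc p)"
  by (rule bit_eqI) (auto simp: bit_delbit bit_simps)

lemma ins_less: "m < 2^(s-1) \<Longrightarrow> p < s \<Longrightarrow> ins m p < 2^s"
  by (auto simp: less_pow_bits bit_ins)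

lemma flip_less: "c < 2^s \<Longrightarrow> p < s \<Longrightarrow> flip_bit p (c::nat) < 2^s"
  by (auto simp: less_pow_bits bit_simps)

lemma unset_less: "c < 2^s \<Longrightarrow> unset_bit p (c::nat) < 2^s"
  by (auto simp: less_pow_bits bit_simps)

lemma ins_delbit_gen: "ins (delbit c (Suc p)) p = unset_bit p c"
  by (rule bit_eqI) (auto simp: bit_delbit bit_ins bit_simps)



lemma tau_mod:
  assumes i: "i \<in> {1..s}" and d: "T j dvd blockM T l q i"
    and b: "\<forall>i'\<in>{1..s}. i' \<noteq> i \<longrightarrow> bit c (i'-1) = bit c' (i'-1)"
  shows "tau T l q s c mod T j = tau T l q s c' mod T j"
proof -
  let ?g = "\<lambda>c i. if bit c (i - 1) then blockM T l q i else 0"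
  have r: "tau T l q s x = ?g x i + (\<Sum>i'\<in>{1..s}-{i}. ?g x i')" for x
    unfolding tau_def using i by (simp add: sum.remove)
  have e: "(\<Sum>i'\<in>{1..s}-{i}. ?g c i') = (\<Sum>i'\<in>{1..s}-{i}. ?g c' i')"
    using b by (intro sum.cong) auto
  have z: "T j dvd ?g x i" for x using d by auto
  have m: "(?g x i + A) mod T j = A mod T j" for x A
    using z[of x] by (metis dvd_imp_mod_0 mod_add_left_eq add_0)
  show ?thesis unfolding r e m ..
qed

lemma l_strict:
  assumes "\<forall>i\<in>{1..s}. l i < l (Suc i)" "1 \<le> a" "a < b" "b \<le> Suc s"
  shows "(l a :: nat) < l b"
  using assms(3,4)
proof (induction b)
  case 0 then show ?case by simp
next
  case (Suc b)
  show ?case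
  proof (cases "a = b")
    case True then show ?thesis using assms(1,2) Suc by auto
  next
    case False
    then have "l a < l b" using Suc by auto
    moreover have "l b < l (Suc b)" using assms(1,2) Suc False by auto
    ultimately show ?thesis by simp
  qed
qed

lemma blk_eq:
  assumes "\<forall>i\<in>{1..s}. l i < l (Suc i)" "i \<in> {1..s}" "l i < j" "j \<le> l (Suc i)"
  shows "blk l s j = i"
  unfolding blk_def
proof (rule the_equality)
  show "i \<in> {1..s} \<and> l i < j \<and> j \<le> l (Suc i)" using assms by auto
next
  fix i' assume h: "i' \<in> {1..s} \<and> l i' < j \<and> j \<le> l (Suc i')"
  show "i' = i"
  proof (rule ccontr)
    assume "i' \<noteq> i"
    then consider "i' < i" | "i < i'" by linarith
    then show False
    proof cases
      case 1
      then have "l (Suc i') \<le> l i"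
        using l_strict[OF assms(1), of "Suc i'" i] h assms by (cases "Suc i' = i") auto
      then show False using h assms by auto
    next
      case 2
      then have "l (Suc i) \<le> l i'"
        using l_strict[OF assms(1), of "Suc i" i'] h assms by (cases "Suc i = i'") auto
      then show False using h assms by auto
    qed
  qed
qed

lemma blk_ex_aux:
  fixes l :: "nat \<Rightarrow> nat" and j :: nat
  assumes "\<forall>i\<in>{1..s}. l i < l (Suc i)" "m \<le> s" "l 1 < j" "j \<le> l (Suc m)"
  shows "\<exists>i\<in>{1..m}. l i < j \<and> j \<le> l (Suc i)"
  using assms(2,3,4)
proof (induction m)
  case 0 then have False by (simp add: numeral_eq_Suc) then show ?case ..
next
  case (Suc m)
  show ?case
  proof (cases "j \<le> l (Suc m)")
    case True then show ?thesis using Suc by force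
  next
    case False
    then have "l (Suc m) < j" "Suc m \<in> {1..Suc m}" by auto
    then show ?thesis using Suc.prems by blast
  qed
qed

lemma pos_cancel: "((t::nat) + a) mod m = (t + b) mod m \<Longrightarrow> a mod m = b mod m"
  using cong_add_lcancel_nat unfolding cong_def by blast

lemma flip_flip: "flip_bit p (flip_bit p c) = (c::nat)"
  by (rule bit_eqI) (auto simp: bit_flip_bit_iff)

lemma bit_flip_same: "bit (flip_bit p (c::nat)) p \<longleftrightarrow> \<not> bit c p"
  by (simp add: bit_flip_bit_iff)

lemma even_card_flip:
  assumes fS: "finite S" and cl: "\<forall>c\<in>S. flip_bit p (c::nat) \<in> S"
  shows "even (card S)"
proof -
  define S0 where "S0 = {c\<in>S. \<not> bit c p}"
  have eq: "S = S0 \<union> flip_bit p ` S0"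
  proof (rule set_eqI, rule iffI)
    fix c assume c: "c \<in> S"
    show "c \<in> S0 \<union> flip_bit p ` S0"
    proof (cases "bit c p")
      case True
      then have "flip_bit p c \<in> S0" using c cl unfolding S0_def by (simp add: bit_flip_same)
      then have "flip_bit p (flip_bit p c) \<in> flip_bit p ` S0" by (rule imageI)
      then show ?thesis unfolding flip_flip by (rule UnI2)
    next
      case False then show ?thesis using c unfolding S0_def by simp
    qed
  next
    fix c assume "c \<in> S0 \<union> flip_bit p ` S0" then show "c \<in> S" using cl unfolding S0_def by blast
  qed
  have dj: "S0 \<inter> flip_bit p ` S0 = {}" unfolding S0_def by (auto simp: bit_flip_same)
  have inj: "inj_on (flip_bit p) S0" by (rule inj_on_inverseI[where g="flip_bit p"]) (rule flip_flip)
  have fin: "finite S0" using fS unfolding S0_def by simp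
  have "card (S0 \<union> flip_bit p ` S0) = card S0 + card (flip_bit p ` S0)"
    using fin dj by (intro card_Un_disjoint) auto
  also have "card (flip_bit p ` S0) = card S0" using inj by (rule card_image)
  finally show ?thesis using eq by simp
qed


unbundle no bit_operations_syntax


definition sg :: "bool \<Rightarrow> real" where "sg b = (if b then -1 else 1)"

lemma sg_card: "finite A \<Longrightarrow> sg (odd (card {c\<in>A. P c})) = (\<Prod>c\<in>A. sg (P c))"
proof (induction A rule: finite_induct)
  case empty then show ?case by (simp add: sg_def)
next
  case (insert x A)
  show ?case
  proof (cases "P x")
    case True
    then have "{c\<in>insert x A. P c} = insert x {c\<in>A. P c}" by auto
    moreover have "x \<notin> {c\<in>A. P c}" using insert by simp
    moreover have "finite {c\<in>A. P c}" using insert by simp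
    ultimately have "card {c\<in>insert x A. P c} = Suc (card {c\<in>A. P c})" by simp
    moreover have "sg (odd (Suc m)) = - sg (odd m)" for m by (simp add: sg_def)
    moreover have "sg (P x) = -1" using True by (simp add: sg_def)
    ultimately show ?thesis using insert by simp
  next
    case False
    then have "{c\<in>insert x A. P c} = {c\<in>A. P c}" by auto
    moreover have "sg (P x) = 1" using False by (simp add: sg_def)
    ultimately show ?thesis using insert by simp
  qed
qed

lemma sg_xor: "sg (a \<noteq> b) = sg a * sg b" by (simp add: sg_def)

lemma prod_if_zero: "finite I \<Longrightarrow> (\<Prod>i\<in>I. if P i then (a i::real) else 0) = (if \<forall>i\<in>I. P i then \<Prod>i\<in>I. a i else 0)"
  by (induction I rule: finite_induct) auto

lemma char_sum:
  assumes "finite I"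
  shows "(\<Sum>\<beta>\<in>PiE I (\<lambda>_. UNIV). \<Prod>i\<in>I. sg (\<beta> i \<and> e i)) = (if \<forall>i\<in>I. \<not> e i then 2 ^ card I else 0)"
proof -
  have "(\<Sum>\<beta>\<in>PiE I (\<lambda>_. UNIV). \<Prod>i\<in>I. sg (\<beta> i \<and> e i)) = (\<Prod>i\<in>I. \<Sum>b\<in>UNIV. sg (b \<and> e i))"
    using assms by (simp add: prod_sum_PiE)
  also have "\<dots> = (\<Prod>i\<in>I. if \<not> e i then 2 else 0)"
    by (intro prod.cong) (auto simp: UNIV_bool sg_def)
  also have "\<dots> = (if \<forall>i\<in>I. \<not> e i then 2 ^ card I else 0)"
    using assms by (simp add: prod_if_zero)
  finally show ?thesis .
qed

lemma bias_sg: "bias n h = (\<Sum>x\<in>F2vecs n. sg (h x)) / 2^n"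
  unfolding bias_def sg_def ..

lemma lin_sg: "sg (lin n \<beta> x) = (\<Prod>j\<in>{1..n}. sg (\<beta> j \<and> x j))"
  unfolding lin_def by (rule sg_card) simp

lemma fourier:
  assumes y: "y \<in> F2vecs n"
  shows "sg (f y) = (\<Sum>\<beta>\<in>F2vecs n. bias n (\<lambda>x. f x \<noteq> lin n \<beta> x) * sg (lin n \<beta> y))"
proof -
  have fin: "finite (F2vecs n)" unfolding F2vecs_def by (simp add: finite_PiE)
  have orth: "(\<Sum>\<beta>\<in>F2vecs n. sg (lin n \<beta> x) * sg (lin n \<beta> y)) = (if x = y then 2^n else 0)"
    if x: "x \<in> F2vecs n" for x
  proof -
    have "(\<Sum>\<beta>\<in>F2vecs n. sg (lin n \<beta> x) * sg (lin n \<beta> y))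
       = (\<Sum>\<beta>\<in>F2vecs n. \<Prod>j\<in>{1..n}. sg (\<beta> j \<and> (x j \<noteq> y j)))"
    proof (intro sum.cong refl)
      fix \<beta>
      have "sg (lin n \<beta> x) * sg (lin n \<beta> y) = (\<Prod>j\<in>{1..n}. sg (\<beta> j \<and> x j) * sg (\<beta> j \<and> y j))"
        by (simp only: lin_sg prod.distrib)
      also have "\<dots> = (\<Prod>j\<in>{1..n}. sg (\<beta> j \<and> (x j \<noteq> y j)))"
        by (intro prod.cong refl) (simp add: sg_def)
      finally show "sg (lin n \<beta> x) * sg (lin n \<beta> y) = (\<Prod>j\<in>{1..n}. sg (\<beta> j \<and> (x j \<noteq> y j)))" .
    qed
    also have "\<dots> = (if \<forall>j\<in>{1..n}. \<not> (x j \<noteq> y j) then 2 ^ card {1..n} else 0)"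
      unfolding F2vecs_def by (rule char_sum) simp
    also have "(\<forall>j\<in>{1..n}. \<not> (x j \<noteq> y j)) \<longleftrightarrow> x = y"
      using x y unfolding F2vecs_def by (auto intro: PiE_ext)
    finally show ?thesis by simp
  qed
  have "(\<Sum>\<beta>\<in>F2vecs n. bias n (\<lambda>x. f x \<noteq> lin n \<beta> x) * sg (lin n \<beta> y))
      = (\<Sum>\<beta>\<in>F2vecs n. (\<Sum>x\<in>F2vecs n. sg (f x) * (sg (lin n \<beta> x) * sg (lin n \<beta> y))) / 2^n)"
    unfolding bias_sg sg_xor by (intro sum.cong refl) (simp add: sum_distrib_right mult.assoc)
  also have "\<dots> = (\<Sum>\<beta>\<in>F2vecs n. \<Sum>x\<in>F2vecs n. sg (f x) * (sg (lin n \<beta> x) * sg (lin n \<beta> y))) / 2^n"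
    by (simp only: sum_divide_distrib)
  also have "\<dots> = (\<Sum>x\<in>F2vecs n. \<Sum>\<beta>\<in>F2vecs n. sg (f x) * (sg (lin n \<beta> x) * sg (lin n \<beta> y))) / 2^n"
    by (rule arg_cong[where f="\<lambda>z. z / 2^n"], rule sum.swap)
  also have "\<dots> = (\<Sum>x\<in>F2vecs n. sg (f x) * (\<Sum>\<beta>\<in>F2vecs n. sg (lin n \<beta> x) * sg (lin n \<beta> y))) / 2^n"
    by (simp only: sum_distrib_left)
  also have "\<dots> = (\<Sum>x\<in>F2vecs n. if x = y then sg (f x) * 2^n else 0) / 2^n"
    by (intro arg_cong[where f="\<lambda>z. z / 2^n"] sum.cong refl) (simp add: orth)
  also have "\<dots> = sg (f y)" using fin y by simp
  finally show ?thesis ..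
qed



locale PCs =
  fixes f :: "(nat \<Rightarrow> bool) \<Rightarrow> bool"
    and n k s t :: nat
    and T q l :: "nat \<Rightarrow> nat"
  assumes s_pos: "s \<ge> 1"
    and l_first: "l 1 = 0"
    and l_mono: "\<forall>i\<in>{1..s}. l i < l (Suc i)"
    and l_last: "l (Suc s) = k"
    and k_le: "k \<le> n"
    and T_pos: "\<forall>j\<in>{1..n}. T j > 0"
    and q_pos: "\<forall>i\<in>{1..s}. q i > 0"
    and G1: "\<forall>j\<in>{k+1..n}. inj_on (\<lambda>c. tau T l q s c mod T j) {..<2^s}"
    and G2: "\<forall>i\<in>{1..s}. \<forall>j. l i < j \<and> j \<le> l (Suc i) \<longrightarrow>
               inj_on (\<lambda>c. tau T l q s c mod T j) {c\<in>{..<2^s}. \<not> bit c (i - 1)}"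
begin

definition pos where "pos c j = (t + tau T l q s c) mod T j"

lemma blockof:
  assumes "j \<in> {1..k}"
  obtains p where "Suc p \<in> {1..s}" "l (Suc p) < j" "j \<le> l (Suc (Suc p))" "blk l s j = Suc p" "p < s"
proof -
  obtain i where i: "i \<in> {1..s}" "l i < j" "j \<le> l (Suc i)"
    using blk_ex_aux[OF l_mono, of s j] assms l_first l_last by auto
  then obtain p where "i = Suc p" by (cases i) auto
  then show ?thesis using that i blk_eq[OF l_mono i] by auto
qed

lemma dvd_block: "l i < j \<Longrightarrow> j \<le> l (Suc i) \<Longrightarrow> T j dvd blockM T l q i"
  unfolding blockM_def by (intro dvd_mult dvd_Lcm) auto

lemma tau_mod_p:
  assumes "Suc p \<in> {1..s}" "l (Suc p) < j" "j \<le> l (Suc (Suc p))"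
    and "\<forall>m. m \<noteq> p \<longrightarrow> bit c m = bit c' m"
  shows "tau T l q s c mod T j = tau T l q s c' mod T j"
proof (rule tau_mod[OF assms(1) dvd_block[OF assms(2,3)]])
  show "\<forall>i'\<in>{1..s}. i' \<noteq> Suc p \<longrightarrow> bit c (i' - 1) = bit c' (i' - 1)"
  proof (intro ballI impI)
    fix i' assume "i' \<in> {1..s}" "i' \<noteq> Suc p"
    then have "i' - 1 \<noteq> p" by auto
    then show "bit c (i' - 1) = bit c' (i' - 1)" using assms(4) by blast
  qed
qed

lemma pos_eq: "tau T l q s c mod T j = tau T l q s c' mod T j \<Longrightarrow> pos c j = pos c' j"
  unfolding pos_def by (metis mod_add_right_eq)

lemma chi_in: "j \<in> {1..n} \<Longrightarrow> chi l s k n c \<alpha> j = (if j \<le> k then \<alpha> j (delbit c (blk l s j)) else False)"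
  unfolding chi_def by simp

lemma delbit_less: "c < 2^s \<Longrightarrow> p < s \<Longrightarrow> delbit c (Suc p) < 2^(s-1)"
  by (auto simp: less_pow_bits bit_delbit split: if_splits)

lemma good_chi:
  assumes j: "j \<in> {1..n}"
  shows "even (card {c\<in>{..<2^s}. chi l s k n c \<alpha> j \<and> pos c j = r})"
proof (cases "j \<le> k")
  case False
  then have "chi l s k n c \<alpha> j = False" for c using j by (simp add: chi_in)
  then have e: "{c\<in>{..<2^s}. chi l s k n c \<alpha> j \<and> pos c j = r} = {}" by auto
  show ?thesis unfolding e by simp
next
  case True
  then have jk: "j \<in> {1..k}" using j by auto
  obtain p where p: "Suc p \<in> {1..s}" "l (Suc p) < j" "j \<le> l (Suc (Suc p))" "blk l s j = Suc p" "p < s"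
    using blockof[OF jk] by blast
  show ?thesis
  proof (rule even_card_flip[where p=p], simp, intro ballI)
    fix c assume c: "c \<in> {c\<in>{..<2^s}. chi l s k n c \<alpha> j \<and> pos c j = r}"
    have "tau T l q s (flip_bit p c) mod T j = tau T l q s c mod T j"
      by (rule tau_mod_p[OF p(1-3)]) (auto simp: bit_flip_bit_iff)
    then have "pos (flip_bit p c) j = pos c j" by (rule pos_eq)
    moreover have "flip_bit p c < 2^s" using c p by (simp add: flip_less)
    moreover have "chi l s k n (flip_bit p c) \<alpha> j = chi l s k n c \<alpha> j"
      using j True p by (simp add: chi_in delbit_flip)
    ultimately show "flip_bit p c \<in> {c\<in>{..<2^s}. chi l s k n c \<alpha> j \<and> pos c j = r}" using c by simp
  qed
qed

end


context PCs begin

definition good where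
  "good B = (\<forall>j\<in>{1..n}. \<forall>r<T j. even (card {c\<in>{..<(2::nat)^s}. B c j \<and> pos c j = r}))"
definition hh where "hh \<alpha> = (\<lambda>c\<in>{..<(2::nat)^s}. chi l s k n c \<alpha>)"
definition gg where "gg B = (\<lambda>j\<in>{1..k}. \<lambda>m\<in>{..<(2::nat)^(s-1)}. B (ins m (blk l s j - 1)) j)"
definition AS where "AS = PiE {1..k} (\<lambda>_. PiE {..<(2::nat)^(s-1)} (\<lambda>_. (UNIV::bool set)))"
definition GB where "GB = {B \<in> PiE {..<(2::nat)^s} (\<lambda>_. F2vecs n). good B}"

lemma hh_in: "hh \<alpha> \<in> GB"
proof -
  have "hh \<alpha> \<in> PiE {..<2^s} (\<lambda>_. F2vecs n)"
    unfolding hh_def F2vecs_def chi_def by auto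
  moreover have "good (hh \<alpha>)"
    unfolding good_def
  proof (intro ballI allI impI)
    fix j r assume j: "j \<in> {1..n}"
    have "{c\<in>{..<2^s}. hh \<alpha> c j \<and> pos c j = r} = {c\<in>{..<2^s}. chi l s k n c \<alpha> j \<and> pos c j = r}"
      unfolding hh_def by auto
    then show "even (card {c\<in>{..<2^s}. hh \<alpha> c j \<and> pos c j = r})" using good_chi[OF j] by simp
  qed
  ultimately show ?thesis unfolding GB_def by simp
qed

lemma gg_in: "gg B \<in> AS"
  unfolding gg_def AS_def by auto

lemma gg_hh:
  assumes a: "\<alpha> \<in> AS"
  shows "gg (hh \<alpha>) = \<alpha>"
proof (rule PiE_ext[OF gg_in[unfolded AS_def] a[unfolded AS_def]])
  fix j assume j: "j \<in> {1..k}"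
  obtain p where p: "Suc p \<in> {1..s}" "l (Suc p) < j" "j \<le> l (Suc (Suc p))" "blk l s j = Suc p" "p < s"
    using blockof[OF j] by blast
  have aj: "\<alpha> j \<in> PiE {..<(2::nat)^(s-1)} (\<lambda>_. UNIV)" using a j unfolding AS_def by auto
  have gj: "gg (hh \<alpha>) j \<in> PiE {..<(2::nat)^(s-1)} (\<lambda>_. (UNIV::bool set))" unfolding gg_def using j by auto
  show "gg (hh \<alpha>) j = \<alpha> j"
  proof (rule PiE_ext[OF gj aj])
    fix m assume m: "m \<in> {..<(2::nat)^(s-1)}"
    have im: "ins m p < 2^s" using m p by (simp add: ins_less)
    have jn: "j \<in> {1..n}" "j \<le> k" using j k_le by auto
    have "gg (hh \<alpha>) j m = hh \<alpha> (ins m p) j" unfolding gg_def using j m p by simp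
    also have "\<dots> = chi l s k n (ins m p) \<alpha> j" unfolding hh_def using im by simp
    also have "\<dots> = \<alpha> j m" using jn p by (simp add: chi_in delbit_ins)
    finally show "gg (hh \<alpha>) j m = \<alpha> j m" .
  qed
qed

lemma pos_less: "j \<in> {1..n} \<Longrightarrow> pos c j < T j"
  unfolding pos_def using T_pos by simp

lemma pos_tau: "pos x j = pos c j \<Longrightarrow> tau T l q s x mod T j = tau T l q s c mod T j"
  unfolding pos_def by (rule pos_cancel)

lemma hh_gg_entry:
  assumes B: "B \<in> GB" and c: "c \<in> {..<(2::nat)^s}" and j: "j \<in> {1..n}"
  shows "chi l s k n c (gg B) j = B c j"
proof -
  have gd: "even (card {x\<in>{..<2^s}. B x j \<and> pos x j = pos c j})"
    using B j pos_less[OF j, of c] unfolding GB_def good_def by blast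
  show ?thesis
  proof (cases "j \<le> k")
    case False
    have "\<not> B c j"
    proof
      assume Bc: "B c j"
      have jk: "j \<in> {k+1..n}" using j False by auto
      have "{x\<in>{..<2^s}. B x j \<and> pos x j = pos c j} = {c}"
      proof (rule set_eqI, rule iffI)
        fix x assume x: "x \<in> {x\<in>{..<2^s}. B x j \<and> pos x j = pos c j}"
        then have "tau T l q s x mod T j = tau T l q s c mod T j" using pos_tau by blast
        then show "x \<in> {c}" using G1 jk x c unfolding inj_on_def by blast
      qed (use Bc c in auto)
      then show False using gd by simp
    qed
    then show ?thesis using j False by (simp add: chi_in)
  next
    case True
    then have jk: "j \<in> {1..k}" using j by auto
    obtain p where p: "Suc p \<in> {1..s}" "l (Suc p) < j" "j \<le> l (Suc (Suc p))" "blk l s j = Suc p" "p < s"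
      using blockof[OF jk] by blast
    have dl: "delbit c (Suc p) < 2^(s-1)" by (rule delbit_less) (use c p in auto)
    have "chi l s k n c (gg B) j = gg B j (delbit c (Suc p))" using j True p by (simp add: chi_in)
    also have "\<dots> = B (unset_bit p c) j" unfolding gg_def using jk dl p by (simp add: ins_delbit_gen)
    also have "\<dots> = B c j"
    proof (cases "bit c p")
      case False
      have "unset_bit p c = c" by (rule bit_eqI) (use False in \<open>auto simp: bit_unset_bit_iff\<close>)
      then show ?thesis by simp
    next
      case True
      define c' where "c' = unset_bit p c"
      have c'C: "c' < 2^s" using c unfolding c'_def by (simp add: unset_less)
      have nb: "\<not> bit c' p" unfolding c'_def by (simp add: bit_unset_bit_iff)
      have neq: "c' \<noteq> c" using nb True by auto
      have tu: "tau T l q s (unset_bit p x) mod T j = tau T l q s x mod T j" for x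
        by (rule tau_mod_p[OF p(1-3)]) (auto simp: bit_unset_bit_iff)
      have pc': "pos c' j = pos c j" unfolding c'_def by (rule pos_eq[OF tu])
      have G2': "inj_on (\<lambda>c. tau T l q s c mod T j) {c\<in>{..<2^s}. \<not> bit c p}"
        using G2 p by fastforce
      have Q: "{x\<in>{..<2^s}. B x j \<and> pos x j = pos c j} = {x\<in>{c, c'}. B x j}"
      proof (rule set_eqI, rule iffI)
        fix x assume x: "x \<in> {x\<in>{..<2^s}. B x j \<and> pos x j = pos c j}"
        have "tau T l q s (unset_bit p x) mod T j = tau T l q s c' mod T j"
          using pos_tau[of x j c] x tu[of x] tu[of c] unfolding c'_def by simp
        moreover have "unset_bit p x \<in> {c\<in>{..<2^s}. \<not> bit c p}" using x
          by (simp add: unset_less bit_unset_bit_iff)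
        moreover have "c' \<in> {c\<in>{..<2^s}. \<not> bit c p}" using c'C nb by simp
        ultimately have ux: "unset_bit p x = c'" using G2' unfolding inj_on_def by blast
        have "x = c \<or> x = c'"
        proof (cases "bit x p")
          case False
          have "unset_bit p x = x" by (rule bit_eqI) (use False in \<open>auto simp: bit_unset_bit_iff\<close>)
          then show ?thesis using ux by simp
        next
          case bx: True
          have "x = c"
          proof (rule bit_eqI)
            fix m show "bit x m = bit c m"
            proof (cases "m = p")
              case True then show ?thesis using bx \<open>bit c p\<close> by simp
            next
              case False
              have "bit (unset_bit p x) m = bit c' m" using ux by simp
              then show ?thesis using False unfolding c'_def by (simp add: bit_unset_bit_iff)
            qed
          qed
          then show ?thesis by simp
        qed
        then show "x \<in> {x\<in>{c, c'}. B x j}" using x by auto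
      next
        fix x assume "x \<in> {x\<in>{c, c'}. B x j}"
        then show "x \<in> {x\<in>{..<2^s}. B x j \<and> pos x j = pos c j}" using c c'C pc' by auto
      qed
      have "B c' j = B c j"
      proof (rule ccontr)
        assume ne: "B c' j \<noteq> B c j"
        have "card {x\<in>{c, c'}. B x j} = 1"
        proof (cases "B c j")
          case True
          then have "{x\<in>{c, c'}. B x j} = {c}" using ne by auto
          then show ?thesis by simp
        next
          case False
          then have "{x\<in>{c, c'}. B x j} = {c'}" using ne by auto
          then show ?thesis by simp
        qed
        then show False using gd Q by simp
      qed
      then show ?thesis unfolding c'_def .
    qed
    finally show ?thesis .
  qed
qed

lemma hh_gg:
  assumes B: "B \<in> GB"
  shows "hh (gg B) = B"
proof -
  have BP: "B \<in> PiE {..<2^s} (\<lambda>_. F2vecs n)" using B unfolding GB_def by simp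
  have HP: "hh (gg B) \<in> PiE {..<2^s} (\<lambda>_. F2vecs n)" using hh_in unfolding GB_def by simp
  show ?thesis
  proof (rule PiE_ext[OF HP BP])
    fix c assume c: "c \<in> {..<(2::nat)^s}"
    have b: "B c \<in> PiE {1..n} (\<lambda>_. UNIV)" using BP c unfolding F2vecs_def by auto
    have h: "hh (gg B) c \<in> PiE {1..n} (\<lambda>_. UNIV)" using HP c unfolding F2vecs_def by auto
    show "hh (gg B) c = B c"
    proof (rule PiE_ext[OF h b])
      fix j assume "j \<in> {1..n}"
      then show "hh (gg B) c j = B c j" using hh_gg_entry[OF B c] c unfolding hh_def by simp
    qed
  qed
qed

lemma bij_hh: "bij_betw hh AS GB"
  by (rule bij_betw_byWitness[where f'=gg]) (auto simp: gg_hh hh_gg hh_in gg_in)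

end


context PCs begin

definition yv where "yv c X = (\<lambda>j\<in>{1..n}. X j (pos c j))"

lemma stepD:
  "(\<Sum>X\<in>PiE {1..n} (\<lambda>j. PiE {..<T j} (\<lambda>_. UNIV)). \<Prod>c\<in>{..<(2::nat)^s}. sg (lin n (B c) (yv c X)))
     = (if good B then 2 ^ (\<Sum>j=1..n. T j) else 0)"
proof -
  define e where "e j r = odd (card {c\<in>{..<(2::nat)^s}. B c j \<and> pos c j = r})" for j r
  have step1: "(\<Prod>c\<in>{..<(2::nat)^s}. sg (lin n (B c) (yv c X)))
     = (\<Prod>j\<in>{1..n}. \<Prod>r\<in>{..<T j}. sg (X j r \<and> e j r))" for X
  proof -
    have "(\<Prod>c\<in>{..<(2::nat)^s}. sg (lin n (B c) (yv c X)))
        = (\<Prod>c\<in>{..<(2::nat)^s}. \<Prod>j\<in>{1..n}. sg (B c j \<and> X j (pos c j)))"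
      unfolding lin_sg yv_def by (intro prod.cong refl) simp
    also have "\<dots> = (\<Prod>j\<in>{1..n}. \<Prod>c\<in>{..<(2::nat)^s}. sg (B c j \<and> X j (pos c j)))"
      by (rule prod.swap)
    also have "\<dots> = (\<Prod>j\<in>{1..n}. \<Prod>r\<in>{..<T j}. sg (X j r \<and> e j r))"
    proof (rule prod.cong[OF refl])
      fix j assume j: "j \<in> {1..n}"
      have "(\<Prod>c\<in>{..<(2::nat)^s}. sg (B c j \<and> X j (pos c j)))
          = (\<Prod>r\<in>{..<T j}. \<Prod>c\<in>{c. c \<in> {..<(2::nat)^s} \<and> pos c j = r}. sg (B c j \<and> X j (pos c j)))"
        by (rule prod.group[symmetric]) (use pos_less[OF j] in auto)
      also have "\<dots> = (\<Prod>r\<in>{..<T j}. sg (X j r \<and> e j r))"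
      proof (rule prod.cong[OF refl])
        fix r
        have "(\<Prod>c\<in>{c. c \<in> {..<(2::nat)^s} \<and> pos c j = r}. sg (B c j \<and> X j (pos c j)))
            = (\<Prod>c\<in>{c. c \<in> {..<(2::nat)^s} \<and> pos c j = r}. sg (X j r \<and> B c j))"
          by (intro prod.cong refl) (auto simp: conj_commute)
        also have "\<dots> = sg (odd (card {c\<in>{c. c \<in> {..<(2::nat)^s} \<and> pos c j = r}. X j r \<and> B c j}))"
          by (rule sg_card[symmetric]) simp
        also have "\<dots> = sg (X j r \<and> e j r)"
        proof (cases "X j r")
          case True
          have "{c\<in>{c. c \<in> {..<(2::nat)^s} \<and> pos c j = r}. X j r \<and> B c j} = {c\<in>{..<(2::nat)^s}. B c j \<and> pos c j = r}"
            using True by auto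
          then show ?thesis using True unfolding e_def by simp
        next
          case False
          then show ?thesis by (simp add: sg_def)
        qed
        finally show "(\<Prod>c\<in>{c. c \<in> {..<(2::nat)^s} \<and> pos c j = r}. sg (B c j \<and> X j (pos c j))) = sg (X j r \<and> e j r)" .
      qed
      finally show "(\<Prod>c\<in>{..<(2::nat)^s}. sg (B c j \<and> X j (pos c j))) = (\<Prod>r\<in>{..<T j}. sg (X j r \<and> e j r))" .
    qed
    finally show ?thesis .
  qed
  have "(\<Sum>X\<in>PiE {1..n} (\<lambda>j. PiE {..<T j} (\<lambda>_. UNIV)). \<Prod>c\<in>{..<(2::nat)^s}. sg (lin n (B c) (yv c X)))
      = (\<Sum>X\<in>PiE {1..n} (\<lambda>j. PiE {..<T j} (\<lambda>_. UNIV)). \<Prod>j\<in>{1..n}. \<Prod>r\<in>{..<T j}. sg (X j r \<and> e j r))"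
    by (simp only: step1)
  also have "\<dots> = (\<Prod>j\<in>{1..n}. \<Sum>x\<in>PiE {..<T j} (\<lambda>_. UNIV). \<Prod>r\<in>{..<T j}. sg (x r \<and> e j r))"
    by (rule prod_sum_PiE[symmetric]) (auto intro: finite_PiE)
  also have "\<dots> = (\<Prod>j\<in>{1..n}. if \<forall>r\<in>{..<T j}. \<not> e j r then 2 ^ T j else 0)"
    by (intro prod.cong refl) (simp add: char_sum)
  also have "\<dots> = (if \<forall>j\<in>{1..n}. \<forall>r\<in>{..<T j}. \<not> e j r then \<Prod>j\<in>{1..n}. 2 ^ T j else 0)"
    by (rule prod_if_zero) simp
  also have "\<dots> = (if good B then 2 ^ (\<Sum>j=1..n. T j) else 0)"
    unfolding good_def e_def by (simp add: power_sum)
  finally show ?thesis .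
qed

end


context PCs begin

lemma main:
  "bias_PC f n T l q s t =
    (\<Sum>\<alpha>\<in>PiE {1..k} (\<lambda>_. PiE {..<2^(s-1)} (\<lambda>_. UNIV)).
       \<Prod>c<2^s. bias n (\<lambda>x. f x \<noteq> lin n (chi l s k n c \<alpha>) x))"
proof -
  define W where "W \<beta> = bias n (\<lambda>x. f x \<noteq> lin n \<beta> x)" for \<beta>
  define XS where "XS = PiE {1..n} (\<lambda>j. PiE {..<T j} (\<lambda>_. (UNIV::bool set)))"
  define BS where "BS = PiE {..<(2::nat)^s} (\<lambda>_. F2vecs n)"
  define N where "N = (\<Sum>j=1..n. T j)"
  have finXS: "finite XS" unfolding XS_def by (intro finite_PiE) (auto intro: finite_PiE)
  have finFV: "finite (F2vecs n)" unfolding F2vecs_def by (auto intro: finite_PiE)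
  have finBS: "finite BS" unfolding BS_def using finFV by (auto intro: finite_PiE)
  have A: "bias_PC f n T l q s t = (\<Sum>X\<in>XS. \<Prod>c\<in>{..<(2::nat)^s}. sg (f (yv c X))) / 2^N"
  proof -
    have "(if PC f n T l q s X t then -1 else (1::real)) = (\<Prod>c\<in>{..<(2::nat)^s}. sg (f (yv c X)))" for X
    proof -
      have "(if PC f n T l q s X t then -1 else (1::real)) = sg (PC f n T l q s X t)" by (simp add: sg_def)
      also have "\<dots> = (\<Prod>c\<in>{..<(2::nat)^s}. sg (f (\<lambda>j\<in>{1..n}. X j ((t + tau T l q s c) mod T j))))"
        unfolding PC_def by (rule sg_card) simp
      finally show ?thesis unfolding yv_def pos_def .
    qed
    then show ?thesis unfolding bias_PC_def XS_def N_def by simp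
  qed
  have yvF: "yv c X \<in> F2vecs n" for c X unfolding yv_def F2vecs_def by auto
  have B1: "(\<Prod>c\<in>{..<(2::nat)^s}. sg (f (yv c X)))
      = (\<Sum>B\<in>BS. (\<Prod>c\<in>{..<(2::nat)^s}. W (B c)) * (\<Prod>c\<in>{..<(2::nat)^s}. sg (lin n (B c) (yv c X))))" for X
  proof -
    have "(\<Prod>c\<in>{..<(2::nat)^s}. sg (f (yv c X)))
        = (\<Prod>c\<in>{..<(2::nat)^s}. \<Sum>\<beta>\<in>F2vecs n. W \<beta> * sg (lin n \<beta> (yv c X)))"
      unfolding W_def by (intro prod.cong refl fourier yvF)
    also have "\<dots> = (\<Sum>B\<in>BS. \<Prod>c\<in>{..<(2::nat)^s}. W (B c) * sg (lin n (B c) (yv c X)))"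
      unfolding BS_def by (rule prod_sum_PiE) (auto simp: finFV)
    also have "\<dots> = (\<Sum>B\<in>BS. (\<Prod>c\<in>{..<(2::nat)^s}. W (B c)) * (\<Prod>c\<in>{..<(2::nat)^s}. sg (lin n (B c) (yv c X))))"
      by (simp add: prod.distrib)
    finally show ?thesis .
  qed
  have B2: "(\<Sum>X\<in>XS. \<Prod>c\<in>{..<(2::nat)^s}. sg (f (yv c X)))
      = (\<Sum>B\<in>BS. (\<Prod>c\<in>{..<(2::nat)^s}. W (B c)) * (if good B then 2^N else 0))"
  proof -
    have "(\<Sum>X\<in>XS. \<Prod>c\<in>{..<(2::nat)^s}. sg (f (yv c X)))
      = (\<Sum>X\<in>XS. \<Sum>B\<in>BS. (\<Prod>c\<in>{..<(2::nat)^s}. W (B c)) * (\<Prod>c\<in>{..<(2::nat)^s}. sg (lin n (B c) (yv c X))))"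
      by (simp only: B1)
    also have "\<dots> = (\<Sum>B\<in>BS. \<Sum>X\<in>XS. (\<Prod>c\<in>{..<(2::nat)^s}. W (B c)) * (\<Prod>c\<in>{..<(2::nat)^s}. sg (lin n (B c) (yv c X))))"
      by (rule sum.swap)
    also have "\<dots> = (\<Sum>B\<in>BS. (\<Prod>c\<in>{..<(2::nat)^s}. W (B c)) * (\<Sum>X\<in>XS. \<Prod>c\<in>{..<(2::nat)^s}. sg (lin n (B c) (yv c X))))"
      by (simp only: sum_distrib_left)
    also have "\<dots> = (\<Sum>B\<in>BS. (\<Prod>c\<in>{..<(2::nat)^s}. W (B c)) * (if good B then 2^N else 0))"
      unfolding XS_def N_def by (simp only: stepD)
    finally show ?thesis .
  qed
  have "bias_PC f n T l q s t = (\<Sum>B\<in>BS. (if good B then (\<Prod>c\<in>{..<(2::nat)^s}. W (B c)) else 0))"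
    unfolding A B2 sum_divide_distrib by (intro sum.cong refl) simp
  also have "\<dots> = (\<Sum>B\<in>GB. \<Prod>c\<in>{..<(2::nat)^s}. W (B c))"
    unfolding GB_def using finBS unfolding BS_def by (rule sum.inter_filter[symmetric])
  also have "\<dots> = (\<Sum>\<alpha>\<in>AS. \<Prod>c\<in>{..<(2::nat)^s}. W (hh \<alpha> c))"
    by (rule sum.reindex_bij_betw[OF bij_hh, symmetric])
  also have "\<dots> = (\<Sum>\<alpha>\<in>AS. \<Prod>c\<in>{..<(2::nat)^s}. W (chi l s k n c \<alpha>))"
    unfolding hh_def by (intro sum.cong prod.cong refl) simp
  finally show ?thesis unfolding W_def AS_def .
qed

end

theorem theorem3:
  fixes f :: "(nat \<Rightarrow> bool) \<Rightarrow> bool"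
    and n k s t :: nat
    and T q l :: "nat \<Rightarrow> nat"
  assumes s_pos: "s \<ge> 1"
    and l_first: "l 1 = 0"
    and l_mono: "\<forall>i\<in>{1..s}. l i < l (Suc i)"
    and l_last: "l (Suc s) = k"
    and k_le: "k \<le> n"
    and T_pos: "\<forall>j\<in>{1..n}. T j > 0"
    and q_pos: "\<forall>i\<in>{1..s}. q i > 0"
    and G1: "\<forall>j\<in>{k+1..n}. inj_on (\<lambda>c. tau T l q s c mod T j) {..<2^s}"
    and G2: "\<forall>i\<in>{1..s}. \<forall>j. l i < j \<and> j \<le> l (Suc i) \<longrightarrow>
               inj_on (\<lambda>c. tau T l q s c mod T j) {c\<in>{..<2^s}. \<not> bit c (i - 1)}"
  shows "bias_PC f n T l q s t =
    (\<Sum>\<alpha>\<in>PiE {1..k} (\<lambda>_. PiE {..<2^(s-1)} (\<lambda>_. UNIV)).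
       \<Prod>c<2^s. bias n (\<lambda>x. f x \<noteq> lin n (chi l s k n c \<alpha>) x))"
proof -
  interpret PCs f n k s t T q l
    unfolding PCs_def using s_pos l_first l_mono l_last k_le T_pos q_pos G1 G2 by blast
  show ?thesis by (rule main)
qed

end
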